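(* Let $(\Omega,\Sigma,P)$ be an atomless probability space with a filtration $\mathcal{F}=\{\mathcal{F}_n\}_{n\ge 0}$ such that each $\mathcal{F}_n$ is generated by an at most countable family $\mathcal{A}(\mathcal{F}_n)$ of atoms and $\bigcup_n\mathcal{F}_n$ generates $\Sigma$. Let $\alpha\in(0,1)$ and $p=\frac{1}{\alpha}$. Define $b_n=\sum_{w\in\mathcal{A}(\mathcal{F}_n)}P(w)\chi_w$ and, for a random variable $F$ with $F_n=\mathbb{E}(F\mid\mathcal{F}_n)$, $\Delta F_n=F_n-F_{n-1}$, $$I^{\mathcal{A}}_\alpha[F]=\sum_{n=1}^\infty b_n^{\alpha}\,\Delta F_n.$$ Then there is a constant $C$ such that for every simple function $F$, $$\|I^{\mathcal{A}}_\alpha[F]\|_{L_\infty}\le C\|F\|_{L_{p,1}}.$$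
   Context: A simple function is a random variable that is $\mathcal{F}_N$-measurable for some $N$ (so the series is a finite sum). The Lorentz quasi-norm is $\|f\|_{L_{p,1}}=\int_0^\infty \big(P(|f|>t)\big)^{1/p}\,dt$, i.e. the $L_1(\mathbb{R}_+,dt/t)$ norm of $t\mapsto t\,(P(|f|>t))^{1/p}$. *)

theory Defs
  imports "HOL-Probability.Probability"
begin

definition atomless :: "'a measure \<Rightarrow> bool" where
  "atomless M \<longleftrightarrow> (\<forall>A\<in>sets M. measure M A > 0 \<longrightarrow>
      (\<exists>B\<in>sets M. B \<subseteq> A \<and> 0 < measure M B \<and> measure M B < measure M A))"

definition atom_weight :: "'a measure \<Rightarrow> 'a set set \<Rightarrow> 'a \<Rightarrow> real" where
  "atom_weight M A x = (\<Sum>\<^sub>\<infinity>w\<in>A. measure M w * indicator w x)"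

definition I_alpha :: "'a measure \<Rightarrow> (nat \<Rightarrow> 'a measure) \<Rightarrow> (nat \<Rightarrow> 'a set set)
    \<Rightarrow> real \<Rightarrow> ('a \<Rightarrow> real) \<Rightarrow> 'a \<Rightarrow> real" where
  "I_alpha M \<F> A \<alpha> f x = (\<Sum>n. atom_weight M (A (Suc n)) x powr \<alpha> *
      (real_cond_exp M (\<F> (Suc n)) f x - real_cond_exp M (\<F> n) f x))"

definition lorentz_p1 :: "'a measure \<Rightarrow> real \<Rightarrow> ('a \<Rightarrow> real) \<Rightarrow> ennreal" where
  "lorentz_p1 M p f = (\<integral>\<^sup>+ t. indicator {0<..} t *
      ennreal (measure M {x\<in>space M. \<bar>f x\<bar> > t} powr (1 / p)) \<partial>lborel)"

end

theory Submission
  imports Defs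
begin



lemma keyK:
  fixes a c s :: real
  assumes a: "0 < a" "a < 1" and c: "0 < c" "c \<le> s"
  shows "(s powr a - c powr a) / s \<le> (a / (1 - a)) * (c powr (a - 1) - s powr (a - 1))"
proof -
  have s: "0 < s" using c by linarith
  define u where "u = s powr a"
  define v where "v = c powr a"
  have u: "u > 0" and v: "v > 0" using s c by (auto simp: u_def v_def)
  have su: "s powr (a - 1) = u / s" using s by (simp add: u_def powr_diff)
  have cv: "c powr (a - 1) = v / c" using c by (simp add: v_def powr_diff)
  have cv2: "c powr (1 - a) = c / v" using c by (simp add: v_def powr_diff)
  have Y: "s powr a * c powr (1 - a) \<le> a * s + (1 - a) * c"
    by (rule Youngs_inequality_0) (use a s c in auto)
  hence Y2: "u * c \<le> v * (a * s + (1 - a) * c)"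
    using v by (simp add: u_def[symmetric] cv2 field_simps)
  have "(u - v) / s \<le> (a / (1 - a)) * (v / c - u / s)"
  proof -
    have "(1 - a) * (u - v) * c \<le> a * (v * s - u * c)" using Y2 by (simp add: algebra_simps)
    hence nn: "0 \<le> (a * (v * s - u * c) - (1 - a) * (u - v) * c) / ((1 - a) * (s * c))"
      using a s c by (intro divide_nonneg_pos) auto
    have "(a / (1 - a)) * (v / c - u / s) - (u - v) / s = (a * (v * s - u * c) - (1 - a) * (u - v) * c) / ((1 - a) * (s * c))"
      using a s c by (simp add: field_simps)
    thus ?thesis using nn by linarith
  qed
  thus ?thesis by (simp add: su cv u_def v_def)
qed

lemma keyE:
  fixes a b q D :: real
  assumes a: "0 < a" "a < 1" and b: "0 < b" and q: "0 \<le> q" "q \<le> 1" "q * b \<le> D"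
  shows "b powr a * q \<le> D powr a"
proof (cases "b \<le> D")
  case True
  have "b powr a * q \<le> b powr a" using q by (simp add: mult_left_le)
  also have "\<dots> \<le> D powr a" using True b a by (intro powr_mono2) auto
  finally show ?thesis .
next
  case False
  show ?thesis
  proof (cases "D \<le> 0")
    case True
    then have "q = 0" using q b by (metis mult_pos_pos not_le order.trans antisym_conv1)
    then show ?thesis by simp
  next
    case D: False
    have "q \<le> D / b" using q b by (simp add: field_simps)
    hence "b powr a * q \<le> b powr a * (D / b)" using b by (intro mult_left_mono) auto
    also have "\<dots> = D * b powr (a - 1)" using b by (simp add: powr_diff)
    also have "\<dots> \<le> D * D powr (a - 1)" using D False a
      by (intro mult_left_mono powr_mono2') auto
    also have "\<dots> = D powr a" using D by (simp add: powr_diff)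
    finally show ?thesis .
  qed
qed

definition Gf :: "real \<Rightarrow> real \<Rightarrow> real \<Rightarrow> real" where
  "Gf a D s = (if s \<le> D then s powr a else D powr a + (a / (1 - a)) * (D powr a - D * s powr (a - 1)))"

lemma Gf_bounds:
  assumes a: "0 < a" "a < 1" and D: "0 < D" and s: "0 < s"
  shows "0 \<le> Gf a D s" "Gf a D s \<le> D powr a / (1 - a)"
proof -
  have aa: "a / (1 - a) \<ge> 0" using a by auto
  have one: "D powr a + (a / (1 - a)) * D powr a = D powr a / (1 - a)"
    using a by (simp add: field_simps)
  show "0 \<le> Gf a D s"
  proof (cases "s \<le> D")
    case False
    have "D * s powr (a - 1) \<le> D * D powr (a - 1)" using D False a
      by (intro mult_left_mono powr_mono2') auto
    also have "\<dots> = D powr a" using D by (simp add: powr_diff)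
    finally have "0 \<le> D powr a - D * s powr (a - 1)" by simp
    then have "0 \<le> (a / (1 - a)) * (D powr a - D * s powr (a - 1))" using aa by (rule mult_nonneg_nonneg[rotated])
    then show ?thesis using False by (simp add: Gf_def)
  qed (simp add: Gf_def)
  show "Gf a D s \<le> D powr a / (1 - a)"
  proof (cases "s \<le> D")
    case True
    have "s powr a \<le> D powr a" using True s a by (intro powr_mono2) auto
    also have "\<dots> \<le> D powr a / (1 - a)" using a
      by (simp add: le_divide_eq algebra_simps)
    finally show ?thesis using True by (simp add: Gf_def)
  next
    case False
    have "0 \<le> D * s powr (a - 1)" using D by simp
    hence "(a / (1 - a)) * (D powr a - D * s powr (a - 1)) \<le> (a / (1 - a)) * D powr a"
      using aa by (intro mult_left_mono) auto
    then show ?thesis using False one by (simp add: Gf_def)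
  qed
qed

lemma Gf_step:
  assumes a: "0 < a" "a < 1" and D: "0 < D" and c: "0 < c" "c \<le> s"
  shows "(s powr a - c powr a) * min 1 (D / s) \<le> Gf a D s - Gf a D c"
proof -
  have s: "0 < s" using c by linarith
  have DD: "D * D powr (a - 1) = D powr a" using D by (simp add: powr_diff)
  consider "s \<le> D" | "D < c" | "c \<le> D" "D < s" by linarith
  then show ?thesis
  proof cases
    case 1
    then have "min 1 (D / s) = 1" using s by (simp add: min_def field_simps)
    then show ?thesis using 1 c by (simp add: Gf_def)
  next
    case 2
    have "min 1 (D / s) = D / s" using s 2 c by (simp add: min_def field_simps)
    moreover have "(s powr a - c powr a) * (D / s) = D * ((s powr a - c powr a) / s)" by simp
    moreover have "D * ((s powr a - c powr a) / s) \<le> D * ((a / (1 - a)) * (c powr (a - 1) - s powr (a - 1)))"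
      using keyK[OF a c] D by (intro mult_left_mono) auto
    ultimately show ?thesis using 2 c by (simp add: Gf_def algebra_simps)
  next
    case 3
    have m: "min 1 (D / s) = D / s" using s 3 by (simp add: min_def field_simps)
    have k: "(s powr a - D powr a) / s \<le> (a / (1 - a)) * (D powr (a - 1) - s powr (a - 1))"
      using keyK[OF a D, of s] 3 by auto
    have "(s powr a - c powr a) * (D / s) = D * ((s powr a - D powr a) / s) + (D powr a - c powr a) * (D / s)"
      using s by (simp add: field_simps)
    also have "\<dots> \<le> D * ((a / (1 - a)) * (D powr (a - 1) - s powr (a - 1))) + (D powr a - c powr a) * 1"
    proof (intro add_mono mult_left_mono)
      show "(s powr a - D powr a) / s \<le> a / (1 - a) * (D powr (a - 1) - s powr (a - 1))" by (rule k)
      show "D / s \<le> 1" using 3 s by simp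
      show "0 \<le> D powr a - c powr a" using 3 c a by (simp add: powr_mono2)
    qed (use D in auto)
    also have "\<dots> = Gf a D s - Gf a D c" using 3 DD by (simp add: Gf_def algebra_simps)
    finally show ?thesis using m by simp
  qed
qed

lemma core:
  fixes b q :: "nat \<Rightarrow> real" and D a :: real
  assumes a: "0 < a" "a < 1" and b: "\<And>n. 0 < b n" "\<And>n. b (Suc n) \<le> b n"
    and q: "\<And>n. 0 \<le> q n" "\<And>n. q n \<le> 1" "\<And>n. q n * b n \<le> D" and N: "1 \<le> N"
  shows "b N powr a * q N + b 1 powr a * q 0 + (\<Sum>n\<in>{1..<N}. (b n powr a - b (Suc n) powr a) * q n)
           \<le> (2 + 1 / (1 - a)) * D powr a"
proof (cases "D \<le> 0")
  case True
  have "q n = 0" for n using q(1)[of n] q(3)[of n] b(1)[of n] True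
    by (metis mult_pos_pos not_le order.trans antisym_conv1)
  then show ?thesis using a by simp
next
  case False
  hence D: "0 < D" by simp
  have t1: "b N powr a * q N \<le> D powr a" by (rule keyE[OF a b(1) q(1) q(2) q(3)])
  have "b 1 powr a * q 0 \<le> b 0 powr a * q 0"
    using b(2)[of 0] a q(1)[of 0] less_imp_le[OF b(1)[of 1]] by (intro mult_right_mono powr_mono2) auto
  also have "\<dots> \<le> D powr a" by (rule keyE[OF a b(1) q(1) q(2) q(3)])
  finally have t2: "b 1 powr a * q 0 \<le> D powr a" .
  have "(\<Sum>n\<in>{1..<N}. (b n powr a - b (Suc n) powr a) * q n)
        \<le> (\<Sum>n\<in>{1..<N}. Gf a D (b n) - Gf a D (b (Suc n)))"
  proof (rule sum_mono)
    fix n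
    have qm: "q n \<le> min 1 (D / b n)" using q(2)[of n] q(3)[of n] b(1)[of n] by (simp add: field_simps)
    have "(b n powr a - b (Suc n) powr a) * q n \<le> (b n powr a - b (Suc n) powr a) * min 1 (D / b n)"
      using b(2)[of n] b(1)[of "Suc n"] a by (intro mult_left_mono qm) (simp add: powr_mono2)
    also have "\<dots> \<le> Gf a D (b n) - Gf a D (b (Suc n))" by (rule Gf_step[OF a D b(1) b(2)])
    finally show "(b n powr a - b (Suc n) powr a) * q n \<le> Gf a D (b n) - Gf a D (b (Suc n))" .
  qed
  also have "\<dots> = Gf a D (b 1) - Gf a D (b N)"
    using sum_Suc_diff'[OF N, of "\<lambda>n. - Gf a D (b n)"] by simp
  also have "\<dots> \<le> D powr a / (1 - a)" using Gf_bounds[OF a D b(1)[of 1]] Gf_bounds[OF a D b(1)[of N]] by linarith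
  finally show ?thesis using t1 t2 a by (simp add: algebra_simps)
qed




locale L3s = prob_space M for M :: "'a measure" +
  fixes F :: "nat \<Rightarrow> 'a measure" and A :: "nat \<Rightarrow> 'a set set"
  assumes subalg: "\<And>n. subalgebra M (F n)"
    and Fmono: "\<And>n. sets (F n) \<subseteq> sets (F (Suc n))"
    and cntA: "\<And>n. countable (A n)"
    and disjA: "\<And>n. disjoint (A n)"
    and unA: "\<And>n. \<Union> (A n) = space M"
    and posA: "\<And>n w. w \<in> A n \<Longrightarrow> w \<in> sets M \<and> measure M w > 0"
    and genA: "\<And>n. sets (F n) = sigma_sets (space M) (A n)"
begin

lemma spaceF: "space (F n) = space M"
  using subalg[of n] by (simp add: subalgebra_def)

lemma dich:
  assumes "S \<in> sigma_sets (space M) (A n)" "a \<in> A n"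
  shows "a \<subseteq> S \<or> a \<inter> S = {}"
  using assms(1)
proof (induction rule: sigma_sets.induct)
  case (Basic b)
  then show ?case using disjA[of n] assms(2) unfolding pairwise_def disjnt_def by blast
next
  case Empty
  then show ?case by simp
next
  case (Compl S)
  have "a \<subseteq> space M" using unA[of n] assms(2) by blast
  then show ?case using Compl by blast
next
  case (Union S)
  then show ?case by blast
qed

definition atm :: "nat \<Rightarrow> 'a \<Rightarrow> 'a set" where
  "atm n x = (THE w. w \<in> A n \<and> x \<in> w)"

lemma at_uniq: "w \<in> A n \<Longrightarrow> x \<in> w \<Longrightarrow> v \<in> A n \<Longrightarrow> x \<in> v \<Longrightarrow> v = w"
  using disjA[of n] unfolding pairwise_def disjnt_def by blast

lemma at_eq: "w \<in> A n \<Longrightarrow> x \<in> w \<Longrightarrow> atm n x = w"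
  unfolding atm_def by (rule the_equality) (simp, metis at_uniq)

lemma at_in: assumes "x \<in> space M" shows "atm n x \<in> A n" "x \<in> atm n x"
proof -
  obtain w where "w \<in> A n" "x \<in> w" using assms unA[of n] by blast
  then show "atm n x \<in> A n" "x \<in> atm n x" using at_eq by auto
qed

lemma at_sub: "x \<in> space M \<Longrightarrow> atm n x \<subseteq> space M"
  using at_in unA by blast

lemma at_setsF: "x \<in> space M \<Longrightarrow> atm n x \<in> sets (F n)"
  using at_in[of x n] genA[of n] by auto

lemma at_sets: "x \<in> space M \<Longrightarrow> atm n x \<in> sets M"
  using at_in[of x n] posA by auto

lemma at_same: "x \<in> space M \<Longrightarrow> y \<in> atm n x \<Longrightarrow> atm n y = atm n x"
  by (rule at_eq) (use at_in[of x n] in auto)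

lemma meas_const:
  fixes g :: "'a \<Rightarrow> real"
  assumes g: "g \<in> borel_measurable (F n)" and x: "x \<in> space M" and y: "y \<in> atm n x"
  shows "g y = g x"
proof -
  have "g -` {g x} \<inter> space (F n) \<in> sets (F n)" using g by (rule measurable_sets) simp
  hence S: "g -` {g x} \<inter> space M \<in> sigma_sets (space M) (A n)" using genA spaceF by simp
  have "x \<in> atm n x \<inter> (g -` {g x} \<inter> space M)" using x at_in by auto
  hence "atm n x \<subseteq> g -` {g x} \<inter> space M" using dich[OF S at_in(1)[OF x]] by blast
  then show ?thesis using y by auto
qed

lemma const_meas:
  fixes g :: "'a \<Rightarrow> real"
  assumes c: "\<And>x y. x \<in> space M \<Longrightarrow> y \<in> atm n x \<Longrightarrow> g y = g x"
  shows "g \<in> borel_measurable (F n)"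
proof (rule measurableI)
  fix S :: "real set" assume "S \<in> sets borel"
  have eq: "g -` S \<inter> space (F n) = \<Union> {w \<in> A n. \<exists>y\<in>w. g y \<in> S}"
  proof
    show "g -` S \<inter> space (F n) \<subseteq> \<Union> {w \<in> A n. \<exists>y\<in>w. g y \<in> S}"
      using at_in spaceF by fastforce
    show "\<Union> {w \<in> A n. \<exists>y\<in>w. g y \<in> S} \<subseteq> g -` S \<inter> space (F n)"
    proof
      fix z assume "z \<in> \<Union> {w \<in> A n. \<exists>y\<in>w. g y \<in> S}"
      then obtain w y where w: "w \<in> A n" "z \<in> w" "y \<in> w" "g y \<in> S" by blast
      have ys: "y \<in> space M" "z \<in> space M" using w unA[of n] by auto
      have "atm n y = w" using at_eq w by auto
      hence "g z = g y" by (intro c[OF ys(1)]) (use w in simp)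
      then show "z \<in> g -` S \<inter> space (F n)" using w ys spaceF by auto
    qed
  qed
  have sub: "{w \<in> A n. \<exists>y\<in>w. g y \<in> S} \<subseteq> A n" by blast
  have sub2: "{w \<in> A n. \<exists>y\<in>w. g y \<in> S} \<subseteq> sets (F n)"
    using sub genA[of n] sigma_sets.Basic[of _ "A n" "space M"] by blast
  have "\<Union> {w \<in> A n. \<exists>y\<in>w. g y \<in> S} \<in> sets (F n)"
    by (rule sets.countable_Union[OF countable_subset[OF sub cntA] sub2])
  then show "g -` S \<inter> space (F n) \<in> sets (F n)" using eq by simp
qed simp

lemma Fmono_le: "n \<le> m \<Longrightarrow> sets (F n) \<subseteq> sets (F m)"
  by (induction m rule: dec_induct) (use Fmono in auto)

lemma at_mono: assumes "n \<le> m" "x \<in> space M" shows "atm m x \<subseteq> atm n x"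
proof -
  have "atm n x \<in> sigma_sets (space M) (A m)" using at_setsF[OF assms(2)] Fmono_le[OF assms(1)] genA by auto
  then show ?thesis using dich[of "atm n x" m "atm m x"] at_in[OF assms(2)] by blast
qed

definition bw :: "nat \<Rightarrow> 'a \<Rightarrow> real" where "bw n x = measure M (atm n x)"

lemma bw_pos: "x \<in> space M \<Longrightarrow> 0 < bw n x"
  using at_in posA unfolding bw_def by blast

lemma bw_anti: "x \<in> space M \<Longrightarrow> bw (Suc n) x \<le> bw n x"
  unfolding bw_def using at_mono[of n "Suc n" x] at_sets by (intro finite_measure_mono) auto

lemma atom_weight_eq: "x \<in> space M \<Longrightarrow> atom_weight M (A n) x = bw n x"
proof -
  assume x: "x \<in> space M"
  have "atom_weight M (A n) x = infsum (\<lambda>w. measure M w * indicator w x) {atm n x}"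
    unfolding atom_weight_def
  proof (rule infsum_cong_neutral)
    fix w assume "w \<in> A n - {atm n x}"
    then have "x \<notin> w" using at_eq[of w n x] by blast
    then show "measure M w * indicator w x = 0" by simp
  qed (use at_in[OF x] in auto)
  then show ?thesis using at_in[OF x] by (simp add: bw_def)
qed

lemma bw_meas: "bw n \<in> borel_measurable (F n)"
  by (rule const_meas) (simp add: bw_def at_same)

lemma atom_weight_meas: "atom_weight M (A n) \<in> borel_measurable M"
proof -
  have "bw n \<in> borel_measurable M" using measurable_from_subalg[OF subalg bw_meas] .
  then show ?thesis by (rule measurable_cong[THEN iffD1, rotated]) (simp add: atom_weight_eq)
qed

end



lemma layer:
  fixes g :: "'a \<Rightarrow> real"
  assumes sf: "sigma_finite_measure M" and g[measurable]: "g \<in> borel_measurable M" and S[measurable]: "S \<in> sets M"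
  shows "(\<integral>\<^sup>+y. indicator S y * ennreal \<bar>g y\<bar> \<partial>M)
       = (\<integral>\<^sup>+t. indicator {0<..} t * emeasure M {y\<in>space M. y \<in> S \<and> t < \<bar>g y\<bar>} \<partial>lborel)"
proof -
  interpret P: pair_sigma_finite M lborel
    unfolding pair_sigma_finite_def using sf lborel.sigma_finite_measure_axioms by blast
  have ms: "(\<lambda>(y, t). indicator S y * indicator {0<..<\<bar>g y\<bar>} t :: ennreal) \<in> borel_measurable (M \<Otimes>\<^sub>M lborel)"
  proof -
    have "(\<lambda>(y, t). indicator S y * indicator {0<..<\<bar>g y\<bar>} t :: ennreal)
        = (\<lambda>p. indicator {p\<in>space (M \<Otimes>\<^sub>M lborel). fst p \<in> S \<and> 0 < snd p \<and> snd p < \<bar>g (fst p)\<bar>} p)"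
      using sets.sets_into_space[OF S] by (auto simp: indicator_def space_pair_measure fun_eq_iff)
    also have "\<dots> \<in> borel_measurable (M \<Otimes>\<^sub>M lborel)"
      by (intro borel_measurable_indicator) measurable
    finally show ?thesis .
  qed
  have "(\<integral>\<^sup>+y. indicator S y * ennreal \<bar>g y\<bar> \<partial>M)
      = (\<integral>\<^sup>+y. (\<integral>\<^sup>+t. indicator S y * indicator {0<..<\<bar>g y\<bar>} t \<partial>lborel) \<partial>M)"
    by (intro nn_integral_cong) (simp add: nn_integral_cmult)
  also have "\<dots> = (\<integral>\<^sup>+t. (\<integral>\<^sup>+y. indicator S y * indicator {0<..<\<bar>g y\<bar>} t \<partial>M) \<partial>lborel)"
    using P.Fubini'[of "\<lambda>y t. indicator S y * indicator {0<..<\<bar>g y\<bar>} t", OF ms] by simp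
  also have "\<dots> = (\<integral>\<^sup>+t. indicator {0<..} t * emeasure M {y\<in>space M. y \<in> S \<and> t < \<bar>g y\<bar>} \<partial>lborel)"
  proof (intro nn_integral_cong)
    fix t :: real
    have "(\<integral>\<^sup>+y. indicator S y * indicator {0<..<\<bar>g y\<bar>} t \<partial>M)
        = (\<integral>\<^sup>+y. indicator {0<..} t * indicator {y\<in>space M. y \<in> S \<and> t < \<bar>g y\<bar>} y \<partial>M)"
      by (intro nn_integral_cong) (auto simp: indicator_def)
    also have "\<dots> = indicator {0<..} t * emeasure M {y\<in>space M. y \<in> S \<and> t < \<bar>g y\<bar>}"
      by (rule nn_integral_cmult_indicator) measurable
    finally show "(\<integral>\<^sup>+y. indicator S y * indicator {0<..<\<bar>g y\<bar>} t \<partial>M)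
        = indicator {0<..} t * emeasure M {y\<in>space M. y \<in> S \<and> t < \<bar>g y\<bar>}" .
  qed
  finally show ?thesis .
qed

context L3s
begin

lemma tail_meas:
  fixes g :: "'a \<Rightarrow> real"
  assumes [measurable]: "g \<in> borel_measurable M" "S \<in> sets M"
  shows "(\<lambda>t. measure M {y\<in>space M. y \<in> S \<and> t < g y}) \<in> borel_measurable borel"
proof -
  let ?h = "\<lambda>t. - measure M {y\<in>space M. y \<in> S \<and> t < g y}"
  have "mono ?h"
  proof (rule monoI)
    fix s t :: real assume "s \<le> t"
    have "measure M {y\<in>space M. y \<in> S \<and> t < g y} \<le> measure M {y\<in>space M. y \<in> S \<and> s < g y}"
      using \<open>s \<le> t\<close> by (intro finite_measure_mono) auto
    then show "?h s \<le> ?h t" by simp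
  qed
  hence "?h \<in> borel_measurable borel" by (rule borel_measurable_mono)
  hence "(\<lambda>t. - ?h t) \<in> borel_measurable borel" by measurable
  then show ?thesis by simp
qed

lemma sfs: "sigma_finite_subalgebra M (F n)"
  by (rule finite_measure_subalgebra_is_sigma_finite)
     (simp add: finite_measure_subalgebra_def finite_measure_subalgebra_axioms_def subalg finite_measure_axioms)

lemma rce_atom:
  assumes f: "integrable M f" and x: "x \<in> space M"
  shows "real_cond_exp M (F n) f x * bw n x = (\<integral>y\<in>atm n x. f y \<partial>M)"
proof -
  interpret S: sigma_finite_subalgebra M "F n" by (rule sfs)
  have "(\<integral>y\<in>atm n x. f y \<partial>M) = (\<integral>y\<in>atm n x. real_cond_exp M (F n) f y \<partial>M)"
    by (rule S.real_cond_exp_intA[OF f at_setsF[OF x]])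
  also have "\<dots> = (\<integral>y\<in>atm n x. real_cond_exp M (F n) f x \<partial>M)"
    by (rule set_lebesgue_integral_cong[OF at_sets[OF x]])
       (use meas_const[OF borel_measurable_cond_exp x] in blast)
  also have "\<dots> = bw n x * real_cond_exp M (F n) f x"
    using set_integral_const[where c="real_cond_exp M (F n) f x", OF at_sets[OF x]]
    by (simp add: bw_def emeasure_eq_measure)
  finally show ?thesis by simp
qed

lemma rce_late:
  assumes f: "integrable M f" and fN: "f \<in> borel_measurable (F N)" and n: "N \<le> n" and x: "x \<in> space M"
  shows "real_cond_exp M (F n) f x = f x"
proof -
  have "(\<integral>y\<in>atm n x. f y \<partial>M) = (\<integral>y\<in>atm n x. f x \<partial>M)"
  proof (rule set_lebesgue_integral_cong[OF at_sets[OF x]], intro allI impI)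
    fix y assume "y \<in> atm n x"
    then have "y \<in> atm N x" using at_mono[OF n x] by blast
    then show "f y = f x" by (rule meas_const[OF fN x])
  qed
  also have "\<dots> = bw n x * f x"
    using set_integral_const[where c="f x", OF at_sets[OF x]] by (simp add: bw_def emeasure_eq_measure)
  finally have "real_cond_exp M (F n) f x * bw n x = bw n x * f x" using rce_atom[OF f x] by simp
  then show ?thesis using bw_pos[OF x, of n] by simp
qed

lemma rce_bound:
  assumes f: "integrable M f" and x: "x \<in> space M"
  shows "ennreal \<bar>real_cond_exp M (F n) f x\<bar>
     \<le> (\<integral>\<^sup>+t. ennreal (indicator {0<..} t * (measure M {y\<in>space M. y \<in> atm n x \<and> t < \<bar>f y\<bar>} / bw n x)) \<partial>lborel)"
proof -
  have fm[measurable]: "f \<in> borel_measurable M" using f by simp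
  have w[measurable]: "atm n x \<in> sets M" by (rule at_sets[OF x])
  define b where "b = bw n x"
  have b: "0 < b" using bw_pos[OF x] b_def by simp
  let ?m = "\<lambda>t. measure M {y\<in>space M. y \<in> atm n x \<and> t < \<bar>f y\<bar>}"
  have mm[measurable]: "?m \<in> borel_measurable borel" by (rule tail_meas) auto
  have "ennreal (\<bar>real_cond_exp M (F n) f x\<bar> * b) = ennreal (norm (\<integral>y. indicator (atm n x) y *\<^sub>R f y \<partial>M))"
  proof -
    have e: "real_cond_exp M (F n) f x * b = (\<integral>y. indicator (atm n x) y *\<^sub>R f y \<partial>M)"
      using rce_atom[OF f x, of n] by (simp add: b_def set_lebesgue_integral_def)
    have "\<bar>real_cond_exp M (F n) f x\<bar> * b = \<bar>real_cond_exp M (F n) f x * b\<bar>" using b by (simp add: abs_mult)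
    then show ?thesis using e by simp
  qed
  also have "\<dots> \<le> (\<integral>\<^sup>+y. norm (indicator (atm n x) y *\<^sub>R f y) \<partial>M)"
    by (rule integral_norm_bound_ennreal) (rule integrable_mult_indicator[OF w f])
  also have "\<dots> = (\<integral>\<^sup>+y. indicator (atm n x) y * ennreal \<bar>f y\<bar> \<partial>M)"
    by (intro nn_integral_cong) (auto simp: indicator_def)
  also have "\<dots> = (\<integral>\<^sup>+t. indicator {0<..} t * emeasure M {y\<in>space M. y \<in> atm n x \<and> t < \<bar>f y\<bar>} \<partial>lborel)"
    by (rule layer) (auto simp: sigma_finite_measure_axioms)
  also have "\<dots> = (\<integral>\<^sup>+t. ennreal (indicator {0<..} t * ?m t) \<partial>lborel)"
    by (intro nn_integral_cong) (auto simp: emeasure_eq_measure indicator_def)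
  finally have 1: "ennreal (\<bar>real_cond_exp M (F n) f x\<bar> * b) \<le> (\<integral>\<^sup>+t. ennreal (indicator {0<..} t * ?m t) \<partial>lborel)" .
  have "ennreal \<bar>real_cond_exp M (F n) f x\<bar> = ennreal (1 / b) * ennreal (\<bar>real_cond_exp M (F n) f x\<bar> * b)"
    using b by (simp add: ennreal_mult[symmetric])
  also have "\<dots> \<le> ennreal (1 / b) * (\<integral>\<^sup>+t. ennreal (indicator {0<..} t * ?m t) \<partial>lborel)"
    by (intro mult_left_mono 1) simp
  also have "\<dots> = (\<integral>\<^sup>+t. ennreal (1 / b) * ennreal (indicator {0<..} t * ?m t) \<partial>lborel)"
    by (rule nn_integral_cmult[symmetric]) measurable
  also have "\<dots> = (\<integral>\<^sup>+t. ennreal (indicator {0<..} t * (?m t / b)) \<partial>lborel)"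
    using b by (intro nn_integral_cong) (simp add: ennreal_mult[symmetric] indicator_def)
  finally show ?thesis by (simp add: b_def)
qed

end



lemma abel:
  fixes bt y :: "nat \<Rightarrow> real"
  assumes "1 \<le> N"
  shows "(\<Sum>n<N. bt (Suc n) * (y (Suc n) - y n))
       = bt N * y N - bt 1 * y 0 + (\<Sum>n\<in>{1..<N}. (bt n - bt (Suc n)) * y n)"
  using assms
proof (induction N rule: nat_induct_at_least)
  case base
  then show ?case by (simp add: algebra_simps)
next
  case (Suc N)
  then show ?case by (simp add: algebra_simps)
qed

lemma one_bound:
  fixes y c :: real and Q :: "real \<Rightarrow> real"
  assumes c: "0 \<le> c" and Q[measurable]: "Q \<in> borel_measurable borel" and Qp: "\<And>t. 0 \<le> Q t"
    and yb: "ennreal \<bar>y\<bar> \<le> (\<integral>\<^sup>+t. ennreal (Q t) \<partial>lborel)"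
  shows "ennreal (c * \<bar>y\<bar>) \<le> (\<integral>\<^sup>+t. ennreal (c * Q t) \<partial>lborel)"
proof -
  have "ennreal (c * \<bar>y\<bar>) = ennreal c * ennreal \<bar>y\<bar>" using c by (simp add: ennreal_mult)
  also have "\<dots> \<le> ennreal c * (\<integral>\<^sup>+t. ennreal (Q t) \<partial>lborel)" by (intro mult_left_mono yb) simp
  also have "\<dots> = (\<integral>\<^sup>+t. ennreal c * ennreal (Q t) \<partial>lborel)" by (rule nn_integral_cmult[symmetric]) measurable
  also have "\<dots> = (\<integral>\<^sup>+t. ennreal (c * Q t) \<partial>lborel)" using c Qp by (intro nn_integral_cong) (simp add: ennreal_mult)
  finally show ?thesis .
qed

lemma sum_bound:
  fixes y c :: "nat \<Rightarrow> real" and Q :: "nat \<Rightarrow> real \<Rightarrow> real"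
  assumes fin: "finite I" and c: "\<And>i. 0 \<le> c i" and Q[measurable]: "\<And>i. Q i \<in> borel_measurable borel"
    and Qp: "\<And>i t. 0 \<le> Q i t"
    and yb: "\<And>i. ennreal \<bar>y i\<bar> \<le> (\<integral>\<^sup>+t. ennreal (Q i t) \<partial>lborel)"
  shows "ennreal (\<Sum>i\<in>I. c i * \<bar>y i\<bar>) \<le> (\<integral>\<^sup>+t. ennreal (\<Sum>i\<in>I. c i * Q i t) \<partial>lborel)"
proof -
  have "ennreal (\<Sum>i\<in>I. c i * \<bar>y i\<bar>) = (\<Sum>i\<in>I. ennreal (c i * \<bar>y i\<bar>))"
    using c by (simp add: sum_ennreal)
  also have "\<dots> \<le> (\<Sum>i\<in>I. (\<integral>\<^sup>+t. ennreal (c i * Q i t) \<partial>lborel))"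
    by (intro sum_mono one_bound c Q Qp yb)
  also have "\<dots> = (\<integral>\<^sup>+t. (\<Sum>i\<in>I. ennreal (c i * Q i t)) \<partial>lborel)"
    by (rule nn_integral_sum[symmetric]) measurable
  also have "\<dots> = (\<integral>\<^sup>+t. ennreal (\<Sum>i\<in>I. c i * Q i t) \<partial>lborel)"
    using c Qp by (intro nn_integral_cong) (simp add: sum_ennreal)
  finally show ?thesis .
qed

context L3s
begin

lemma main_bound:
  assumes a: "0 < a" "a < 1" and f: "integrable M f" and fN: "f \<in> borel_measurable (F N)" and x: "x \<in> space M"
  shows "ennreal \<bar>I_alpha M F A a f x\<bar> \<le> ennreal (2 + 1 / (1 - a)) *
      (\<integral>\<^sup>+t. indicator {0<..} t * ennreal (measure M {y\<in>space M. \<bar>f y\<bar> > t} powr a) \<partial>lborel)"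
proof -
  have fm[measurable]: "f \<in> borel_measurable M" using f by simp
  define y where "y n = real_cond_exp M (F n) f x" for n
  define b where "b n = bw n x" for n
  have bpos: "\<And>n. 0 < b n" using bw_pos[OF x] by (simp add: b_def)
  have banti: "\<And>n. b (Suc n) \<le> b n" using bw_anti[OF x] by (simp add: b_def)
  define K where "K = 2 + 1 / (1 - a)"
  have K: "0 \<le> K" using a by (simp add: K_def)
  let ?D = "\<lambda>t. measure M {y\<in>space M. t < \<bar>f y\<bar>}"
  have Dm[measurable]: "?D \<in> borel_measurable borel" using tail_meas[of "\<lambda>y. \<bar>f y\<bar>" "space M"] by simp
  have I: "I_alpha M F A a f x = (\<Sum>n<N. b (Suc n) powr a * (y (Suc n) - y n))"
  proof -
    have "I_alpha M F A a f x = (\<Sum>n. atom_weight M (A (Suc n)) x powr a *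
      (real_cond_exp M (F (Suc n)) f x - real_cond_exp M (F n) f x))" by (simp add: I_alpha_def)
    also have "\<dots> = (\<Sum>n<N. atom_weight M (A (Suc n)) x powr a *
      (real_cond_exp M (F (Suc n)) f x - real_cond_exp M (F n) f x))"
    proof (rule suminf_finite)
      fix n assume "n \<notin> {..<N}"
      then have "N \<le> n" by simp
      then show "atom_weight M (A (Suc n)) x powr a *
      (real_cond_exp M (F (Suc n)) f x - real_cond_exp M (F n) f x) = 0"
        using rce_late[OF f fN _ x, of n] rce_late[OF f fN _ x, of "Suc n"] by simp
    qed simp
    finally show ?thesis by (simp add: atom_weight_eq[OF x] y_def b_def)
  qed
  show ?thesis
  proof (cases "N = 0")
    case True
    then show ?thesis using I by simp
  next
    case False
    then have N: "1 \<le> N" by simp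
    define Q where "Q n t = indicator {0<..} t * (measure M {y\<in>space M. y \<in> atm n x \<and> t < \<bar>f y\<bar>} / b n)" for n t
    have Qm[measurable]: "Q n \<in> borel_measurable borel" for n
    proof -
      have "(\<lambda>t. measure M {y\<in>space M. y \<in> atm n x \<and> t < \<bar>f y\<bar>}) \<in> borel_measurable borel"
        by (rule tail_meas) (auto simp: at_sets[OF x])
      then show ?thesis unfolding Q_def by measurable
    qed
    have Qp: "0 \<le> Q n t" for n t using bpos[of n] by (simp add: Q_def)
    have yb: "ennreal \<bar>y n\<bar> \<le> (\<integral>\<^sup>+t. ennreal (Q n t) \<partial>lborel)" for n
      using rce_bound[OF f x, of n] by (simp add: y_def Q_def b_def)
    have cpos: "0 \<le> b n powr a - b (Suc n) powr a" for n
      using banti[of n] bpos[of "Suc n"] a by (simp add: powr_mono2)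
    define R1 where "R1 = b N powr a * \<bar>y N\<bar>"
    define R2 where "R2 = b 1 powr a * \<bar>y 0\<bar>"
    define R3 where "R3 = (\<Sum>n\<in>{1..<N}. (b n powr a - b (Suc n) powr a) * \<bar>y n\<bar>)"
    have R3p: "0 \<le> R3" unfolding R3_def using cpos by (intro sum_nonneg mult_nonneg_nonneg) auto
    have "\<bar>I_alpha M F A a f x\<bar> = \<bar>b N powr a * y N - b 1 powr a * y 0
        + (\<Sum>n\<in>{1..<N}. (b n powr a - b (Suc n) powr a) * y n)\<bar>"
      using I abel[OF N, of "\<lambda>n. b n powr a" y] by simp
    also have "\<dots> \<le> R1 + R2 + R3"
    proof -
      have "\<bar>(\<Sum>n\<in>{1..<N}. (b n powr a - b (Suc n) powr a) * y n)\<bar>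
          \<le> (\<Sum>n\<in>{1..<N}. \<bar>(b n powr a - b (Suc n) powr a) * y n\<bar>)" by (rule sum_abs)
      also have "\<dots> = R3" unfolding R3_def using cpos by (intro sum.cong) (auto simp: abs_mult)
      finally have "\<bar>(\<Sum>n\<in>{1..<N}. (b n powr a - b (Suc n) powr a) * y n)\<bar> \<le> R3" .
      moreover have "\<bar>b N powr a * y N\<bar> = R1" by (simp add: R1_def abs_mult)
      moreover have "\<bar>b 1 powr a * y 0\<bar> = R2" by (simp add: R2_def abs_mult)
      ultimately show ?thesis by linarith
    qed
    finally have IR: "\<bar>I_alpha M F A a f x\<bar> \<le> R1 + R2 + R3" .
    have e1: "ennreal R1 \<le> (\<integral>\<^sup>+t. ennreal (b N powr a * Q N t) \<partial>lborel)"
      unfolding R1_def by (rule one_bound) (auto intro: Qp yb)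
    have e2: "ennreal R2 \<le> (\<integral>\<^sup>+t. ennreal (b 1 powr a * Q 0 t) \<partial>lborel)"
      unfolding R2_def by (rule one_bound) (auto intro: Qp yb)
    have e3: "ennreal R3 \<le> (\<integral>\<^sup>+t. ennreal (\<Sum>n\<in>{1..<N}. (b n powr a - b (Suc n) powr a) * Q n t) \<partial>lborel)"
      unfolding R3_def by (rule sum_bound[OF _ cpos]) (auto intro: Qp yb)
    have "ennreal \<bar>I_alpha M F A a f x\<bar> \<le> ennreal (R1 + R2 + R3)"
      using IR by (rule ennreal_leI)
    also have "\<dots> = ennreal R1 + ennreal R2 + ennreal R3"
      using R3p by (simp add: R1_def R2_def ennreal_plus)
    also have "\<dots> \<le> (\<integral>\<^sup>+t. ennreal (b N powr a * Q N t) \<partial>lborel) + (\<integral>\<^sup>+t. ennreal (b 1 powr a * Q 0 t) \<partial>lborel)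
        + (\<integral>\<^sup>+t. ennreal (\<Sum>n\<in>{1..<N}. (b n powr a - b (Suc n) powr a) * Q n t) \<partial>lborel)"
      by (intro add_mono e1 e2 e3)
    also have "\<dots> = (\<integral>\<^sup>+t. ennreal (b N powr a * Q N t) + ennreal (b 1 powr a * Q 0 t)
        + ennreal (\<Sum>n\<in>{1..<N}. (b n powr a - b (Suc n) powr a) * Q n t) \<partial>lborel)"
      by (simp add: nn_integral_add)
    also have "\<dots> \<le> (\<integral>\<^sup>+t. ennreal K * (indicator {0<..} t * ennreal (?D t powr a)) \<partial>lborel)"
    proof (rule nn_integral_mono)
      fix t :: real
      show "ennreal (b N powr a * Q N t) + ennreal (b 1 powr a * Q 0 t)
        + ennreal (\<Sum>n\<in>{1..<N}. (b n powr a - b (Suc n) powr a) * Q n t)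
        \<le> ennreal K * (indicator {0<..} t * ennreal (?D t powr a))"
      proof (cases "0 < t")
        case False
        then show ?thesis by (simp add: Q_def)
      next
        case True
        have q1: "Q n t \<le> 1" for n
        proof -
          have "measure M {y\<in>space M. y \<in> atm n x \<and> t < \<bar>f y\<bar>} \<le> b n"
            unfolding b_def bw_def by (intro finite_measure_mono) (auto simp: at_sets[OF x])
          then show ?thesis using True bpos[of n] by (simp add: Q_def field_simps)
        qed
        have q2: "Q n t * b n \<le> ?D t" for n
        proof -
          have "measure M {y\<in>space M. y \<in> atm n x \<and> t < \<bar>f y\<bar>} \<le> ?D t"
            by (intro finite_measure_mono) auto
          then show ?thesis using True bpos[of n] by (simp add: Q_def)
        qed
        have core': "b N powr a * Q N t + b 1 powr a * Q 0 t + (\<Sum>n\<in>{1..<N}. (b n powr a - b (Suc n) powr a) * Q n t)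
            \<le> K * ?D t powr a"
          unfolding K_def by (rule core[where b=b and q="\<lambda>n. Q n t" and D="?D t", OF a bpos banti Qp q1 q2 N])
        have s3: "0 \<le> (\<Sum>n\<in>{1..<N}. (b n powr a - b (Suc n) powr a) * Q n t)"
          using cpos Qp by (intro sum_nonneg mult_nonneg_nonneg) auto
        have "ennreal (b N powr a * Q N t) + ennreal (b 1 powr a * Q 0 t)
            + ennreal (\<Sum>n\<in>{1..<N}. (b n powr a - b (Suc n) powr a) * Q n t)
            = ennreal (b N powr a * Q N t + b 1 powr a * Q 0 t + (\<Sum>n\<in>{1..<N}. (b n powr a - b (Suc n) powr a) * Q n t))"
          using s3 Qp by (simp add: ennreal_plus)
        also have "\<dots> \<le> ennreal (K * ?D t powr a)" by (rule ennreal_leI[OF core'])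
        also have "\<dots> = ennreal K * (indicator {0<..} t * ennreal (?D t powr a))"
          using True K by (simp add: ennreal_mult)
        finally show ?thesis .
      qed
    qed
    also have "\<dots> = ennreal K * (\<integral>\<^sup>+t. indicator {0<..} t * ennreal (?D t powr a) \<partial>lborel)"
      by (rule nn_integral_cmult) measurable
    finally show ?thesis by (simp add: K_def)
  qed
qed

end



theorem lemma3:
  fixes M :: "'a measure" and \<F> :: "nat \<Rightarrow> 'a measure" and A :: "nat \<Rightarrow> 'a set set"
    and \<alpha> p :: real
  assumes "prob_space M"
    and "atomless M"
    and "\<And>n. subalgebra M (\<F> n)"
    and "\<And>n. sets (\<F> n) \<subseteq> sets (\<F> (Suc n))"
    and "\<And>n. countable (A n)"
    and "\<And>n. disjoint (A n)"
    and "\<And>n. \<Union> (A n) = space M"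
    and "\<And>n w. w \<in> A n \<Longrightarrow> w \<in> sets M \<and> measure M w > 0"
    and "\<And>n. sets (\<F> n) = sigma_sets (space M) (A n)"
    and "sets M = sigma_sets (space M) (\<Union>n. sets (\<F> n))"
    and "0 < \<alpha>" "\<alpha> < 1" "p = 1 / \<alpha>"
  shows "\<exists>C::real. C > 0 \<and> (\<forall>f N. f \<in> borel_measurable (\<F> N) \<longrightarrow>
           esssup M (\<lambda>x. ereal \<bar>I_alpha M \<F> A \<alpha> f x\<bar>)
             \<le> ereal C * enn2ereal (lorentz_p1 M p f))"
proof -
  interpret L: L3s M \<F> A
    using assms(1,3-9) by (auto simp: L3s_def L3s_axioms_def)
  have a: "0 < \<alpha>" "\<alpha> < 1" using assms(11,12) by auto
  have pa: "1 / p = \<alpha>" using assms(13) by simp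
  define C where "C = 2 + 1 / (1 - \<alpha>)"
  have C: "0 < C" using a by (simp add: C_def add_pos_nonneg)
  show ?thesis
  proof (intro exI conjI allI impI)
    show "0 < C" by (rule C)
    fix f :: "'a \<Rightarrow> real" and N :: nat assume fN: "f \<in> borel_measurable (\<F> N)"
    have fM[measurable]: "f \<in> borel_measurable M" by (rule measurable_from_subalg[OF assms(3) fN])
    let ?L = "\<integral>\<^sup>+t. indicator {0<..} t * ennreal (measure M {y\<in>space M. \<bar>f y\<bar> > t} powr \<alpha>) \<partial>lborel"
    have Leq: "lorentz_p1 M p f = ?L" by (simp add: lorentz_p1_def pa)
    show "esssup M (\<lambda>x. ereal \<bar>I_alpha M \<F> A \<alpha> f x\<bar>) \<le> ereal C * enn2ereal (lorentz_p1 M p f)"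
    proof (cases "integrable M f")
      case True
      have Ieq: "I_alpha M \<F> A \<alpha> f = (\<lambda>x. \<Sum>n. atom_weight M (A (Suc n)) x powr \<alpha> *
          (real_cond_exp M (\<F> (Suc n)) f x - real_cond_exp M (\<F> n) f x))"
        by (simp add: I_alpha_def fun_eq_iff)
      have [measurable]: "atom_weight M (A n) \<in> borel_measurable M" for n by (rule L.atom_weight_meas)
      have Im[measurable]: "I_alpha M \<F> A \<alpha> f \<in> borel_measurable M" unfolding Ieq by measurable
      show ?thesis
      proof (rule esssup_I)
        show "(\<lambda>x. ereal \<bar>I_alpha M \<F> A \<alpha> f x\<bar>) \<in> borel_measurable M" by measurable
        show "AE x in M. ereal \<bar>I_alpha M \<F> A \<alpha> f x\<bar> \<le> ereal C * enn2ereal (lorentz_p1 M p f)"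
        proof (rule AE_I2)
          fix x assume x: "x \<in> space M"
          have "ennreal \<bar>I_alpha M \<F> A \<alpha> f x\<bar> \<le> ennreal C * lorentz_p1 M p f"
            using L.main_bound[OF a True fN x] by (simp add: Leq C_def)
          hence "enn2ereal (ennreal \<bar>I_alpha M \<F> A \<alpha> f x\<bar>) \<le> enn2ereal (ennreal C * lorentz_p1 M p f)"
            by (simp add: less_eq_ennreal.rep_eq)
          then show "ereal \<bar>I_alpha M \<F> A \<alpha> f x\<bar> \<le> ereal C * enn2ereal (lorentz_p1 M p f)"
            using C by (simp add: times_ennreal.rep_eq)
        qed
      qed
    next
      case False
      have "lorentz_p1 M p f = \<infinity>"
      proof (rule ccontr)
        assume ne: "lorentz_p1 M p f \<noteq> \<infinity>"
        have "(\<integral>\<^sup>+x. ennreal (norm (f x)) \<partial>M) = (\<integral>\<^sup>+x. indicator (space M) x * ennreal \<bar>f x\<bar> \<partial>M)"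
          by (intro nn_integral_cong) simp
        also have "\<dots> = (\<integral>\<^sup>+t. indicator {0<..} t * emeasure M {y\<in>space M. y \<in> space M \<and> t < \<bar>f y\<bar>} \<partial>lborel)"
          by (rule layer) (auto simp: L.sigma_finite_measure_axioms)
        also have "\<dots> \<le> ?L"
        proof (rule nn_integral_mono)
          fix t :: real
          let ?D = "measure M {y\<in>space M. \<bar>f y\<bar> > t}"
          have D01: "0 \<le> ?D" "?D \<le> 1" by (auto simp: L.prob_le_1)
          have "?D \<le> ?D powr \<alpha>"
          proof (cases "?D = 0")
            case False
            then have "?D = ?D powr 1" using D01 by simp
            also have "\<dots> \<le> ?D powr \<alpha>" using D01 a by (intro powr_mono') auto
            finally show ?thesis .
          qed simp
          then have "emeasure M {y\<in>space M. y \<in> space M \<and> t < \<bar>f y\<bar>} \<le> ennreal (?D powr \<alpha>)"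
            by (simp add: L.emeasure_eq_measure)
          then show "indicator {0<..} t * emeasure M {y\<in>space M. y \<in> space M \<and> t < \<bar>f y\<bar>}
              \<le> indicator {0<..} t * ennreal (?D powr \<alpha>)" by (intro mult_left_mono) auto
        qed
        also have "\<dots> < \<infinity>" using ne Leq by (simp add: less_top)
        finally have "integrable M f" by (intro integrableI_bounded) auto
        then show False using False by simp
      qed
      then show ?thesis using C by simp
    qed
  qed
qed



end
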